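(* Let $d\ge2$ and let $N_1,\dots,N_d$ be positive integers. With $\mathbf{N}=(N_1,\dots,N_d)$ and $\mathbf{N}'=(N_1,\dots,N_{d-1})$, \[ \operatorname{disc}(\mathcal{A}_{\mathbf{N}})\le\max\Big(\operatorname{disc}(\mathcal{A}_{\mathbf{N}'}),\sqrt{6N_d\log(2N_1\cdots N_d)}\Big). \]
   Context: $[N]=\{1,\dots,N\}$; $\log$ is the natural logarithm. An arithmetic progression in $k$ dimensions is a set $\{\mathbf{a}+i\mathbf{b}: i=0,\dots,l-1\}$ with $\mathbf{a},\mathbf{b}\in\mathbb{Z}^k$, $\mathbf{b}\ne\mathbf{0}$, $l\in\mathbb{N}$. For $\mathbf{M}=(M_1,\dots,M_k)$, $\mathcal{A}_{\mathbf{M}}$ is the family of arithmetic progressions in $k$ dimensions contained in $\Omega=[M_1]\times\cdots\times[M_k]$, and $\operatorname{disc}(\mathcal{A}_{\mathbf{M}})=\min_{\chi:\Omega\to\{1,-1\}}\max_{A\in\mathcal{A}_{\mathbf{M}}}|\sum_{x\in A}\chi(x)|$. *)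

theory Defs
  imports "HOL-Analysis.Analysis"
begin

text \<open>Points of Z^k are represented as integer lists of length k.
  The grid [M_1] x ... x [M_k] for M = [M_1,...,M_k]:\<close>
definition grid :: "nat list \<Rightarrow> int list set" where
  "grid M = {x. length x = length M \<and> (\<forall>i<length M. 1 \<le> x ! i \<and> x ! i \<le> int (M ! i))}"

definition arith_prog :: "int list \<Rightarrow> int list \<Rightarrow> nat \<Rightarrow> int list set" where
  "arith_prog a b l = {map2 (+) a (map (\<lambda>c. int i * c) b) | i. i < l}"

definition AP_family :: "nat list \<Rightarrow> int list set set" where
  "AP_family M = {arith_prog a b l | a b l.
      length a = length M \<and> length b = length M \<and> b \<noteq> replicate (length M) 0 \<and>
      l \<ge> 1 \<and> arith_prog a b l \<subseteq> grid M}"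

definition disc :: "nat list \<Rightarrow> real" where
  "disc M = (INF col\<in>{col. \<forall>x\<in>grid M. (col :: int list \<Rightarrow> int) x \<in> {1, -1}}.
               (SUP A\<in>AP_family M. real_of_int \<bar>\<Sum>x\<in>A. col x\<bar>))"

end

theory Submission
  imports Defs "HOL-Probability.Hoeffding"
begin


lemma cosh_le_aux: fixes x :: real assumes "x \<ge> 0"
  shows "exp x + exp (-x) \<le> 2 * exp (x^2/2)"
proof -
  have "-(2*x) * (1/2) + ln (1 + (1/2) * (exp (2*x) - 1)) \<le> (2*x)^2/8"
    by (rule Hoeffdings_lemma_aux) (use assms in auto)
  hence "ln ((1 + exp (2*x))/2) \<le> x + x^2/2"
    by (simp add: power2_eq_square field_simps)
  hence "(1 + exp (2*x))/2 \<le> exp (x + x^2/2)"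
    by (smt (verit) exp_gt_zero exp_le_cancel_iff exp_ln)
  hence "(1 + exp (2*x))/2 \<le> exp x * exp (x^2/2)" by (simp add: exp_add)
  hence "(1 + exp x * exp x)/2 \<le> exp x * exp (x^2/2)" by (simp add: exp_add[symmetric])
  hence "(exp (-x) + exp x)/2 \<le> exp (x^2/2)"
    by (simp add: exp_minus field_simps)
  thus ?thesis by simp
qed

lemma cosh_le: fixes x :: real
  shows "exp x + exp (-x) \<le> 2 * exp (x^2/2)"
proof (cases "x \<ge> 0")
  case True thus ?thesis by (rule cosh_le_aux)
next
  case False
  hence "exp (-x) + exp (-(-x)) \<le> 2 * exp ((-x)^2/2)" by (intro cosh_le_aux) auto
  thus ?thesis by simp
qed

lemma mgf_bound:
  fixes w :: "int \<Rightarrow> real" and I :: "int set"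
  assumes "finite I"
  shows "(\<Sum>\<sigma>\<in>PiE I (\<lambda>_. {-1,1::int}). exp (lam * (\<Sum>t\<in>I. w t * of_int (\<sigma> t))))
     \<le> 2 ^ card I * exp (lam^2 * (\<Sum>t\<in>I. (w t)^2) / 2)"
proof -
  have "(\<Sum>\<sigma>\<in>PiE I (\<lambda>_. {-1,1::int}). exp (lam * (\<Sum>t\<in>I. w t * of_int (\<sigma> t))))
      = (\<Sum>\<sigma>\<in>PiE I (\<lambda>_. {-1,1::int}). \<Prod>t\<in>I. exp (lam * w t * of_int (\<sigma> t)))"
    by (simp add: sum_distrib_left exp_sum[OF assms] mult.assoc)
  also have "\<dots> = (\<Prod>t\<in>I. \<Sum>s\<in>{-1,1::int}. exp (lam * w t * of_int s))"
    by (rule prod_sum_PiE[symmetric]) (use assms in auto)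
  also have "\<dots> = (\<Prod>t\<in>I. exp (lam * w t) + exp (-(lam * w t)))"
    by (simp add: add.commute)
  also have "\<dots> \<le> (\<Prod>t\<in>I. 2 * exp ((lam * w t)^2/2))"
    by (intro prod_mono conjI cosh_le) (auto intro: add_nonneg_nonneg)
  also have "\<dots> = 2 ^ card I * exp (lam^2 * (\<Sum>t\<in>I. (w t)^2) / 2)"
    by (simp add: prod.distrib exp_sum[OF assms, symmetric] sum_divide_distrib sum_distrib_left
        power_mult_distrib)
  finally show ?thesis .
qed

lemma tail_bound:
  fixes w :: "int \<Rightarrow> real" and I :: "int set"
  assumes "finite I" "L > 0" "B \<ge> 0" "(\<Sum>t\<in>I. (w t)^2) \<le> L"
  shows "real (card {\<sigma>\<in>PiE I (\<lambda>_. {-1,1::int}). (\<Sum>t\<in>I. w t * of_int (\<sigma> t)) > B})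
     \<le> 2 ^ card I * exp (-(B^2/(2*L)))"
proof -
  define lam where "lam = B / L"
  have l0: "lam \<ge> 0" using assms by (simp add: lam_def)
  define S where "S = {\<sigma>\<in>PiE I (\<lambda>_. {-1,1::int}). (\<Sum>t\<in>I. w t * of_int (\<sigma> t)) > B}"
  have fin: "finite (PiE I (\<lambda>_. {-1,1::int}))" using assms by (simp add: finite_PiE)
  have "real (card S) * exp (lam * B) = (\<Sum>\<sigma>\<in>S. exp (lam * B))" by simp
  also have "\<dots> \<le> (\<Sum>\<sigma>\<in>S. exp (lam * (\<Sum>t\<in>I. w t * of_int (\<sigma> t))))"
    by (intro sum_mono) (use l0 in \<open>auto simp: S_def intro!: mult_left_mono\<close>)
  also have "\<dots> \<le> (\<Sum>\<sigma>\<in>PiE I (\<lambda>_. {-1,1::int}). exp (lam * (\<Sum>t\<in>I. w t * of_int (\<sigma> t))))"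
    by (intro sum_mono2 fin) (auto simp: S_def)
  also have "\<dots> \<le> 2 ^ card I * exp (lam^2 * (\<Sum>t\<in>I. (w t)^2) / 2)"
    by (rule mgf_bound[OF assms(1)])
  also have "\<dots> \<le> 2 ^ card I * exp (lam^2 * L / 2)"
    using assms(4) by (auto intro!: mult_left_mono divide_right_mono)
  finally have "real (card S) \<le> 2 ^ card I * exp (lam^2 * L / 2) / exp (lam * B)"
    by (simp add: field_simps)
  also have "\<dots> = 2 ^ card I * exp (lam^2 * L / 2 - lam * B)"
    by (simp add: exp_diff)
  also have "lam^2 * L / 2 - lam * B = -(B^2/(2*L))"
    using assms(2) by (simp add: lam_def power2_eq_square field_simps)
  finally show ?thesis by (simp add: S_def)
qed


lemma tail_inj:
  fixes c :: "nat \<Rightarrow> real" and I :: "int set" and pos :: "nat \<Rightarrow> int"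
  assumes "finite I" "inj_on pos {..<l}" "pos ` {..<l} \<subseteq> I" "\<forall>i. \<bar>c i\<bar> \<le> 1" "l > 0" "B \<ge> 0"
  shows "real (card {\<sigma>\<in>PiE I (\<lambda>_. {-1,1::int}). \<bar>\<Sum>i<l. c i * of_int (\<sigma> (pos i))\<bar> > B})
     \<le> 2 * 2 ^ card I * exp (-(B^2/(2*real l)))"
proof -
  define w where "w t = (if t \<in> pos ` {..<l} then c (the_inv_into {..<l} pos t) else 0)" for t
  have key: "(\<Sum>t\<in>I. f t * g t) = (\<Sum>i<l. f (pos i) * g (pos i))"
    if "\<And>t. t \<notin> pos ` {..<l} \<Longrightarrow> f t = 0" for f g :: "int \<Rightarrow> real"
  proof -
    have "(\<Sum>t\<in>I. f t * g t) = (\<Sum>t\<in>pos ` {..<l}. f t * g t)"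
      by (rule sum.mono_neutral_right) (use assms that in auto)
    also have "\<dots> = (\<Sum>i<l. f (pos i) * g (pos i))"
      by (subst sum.reindex) (use assms in auto)
    finally show ?thesis .
  qed
  have wpos: "w (pos i) = c i" if "i < l" for i
    using that assms(2) by (auto simp: w_def the_inv_into_f_f)
  have S1: "(\<Sum>t\<in>I. w t * of_int (\<sigma> t)) = (\<Sum>i<l. c i * of_int (\<sigma> (pos i)))" for \<sigma> :: "int \<Rightarrow> int"
  proof -
    have "(\<Sum>t\<in>I. w t * of_int (\<sigma> t)) = (\<Sum>i<l. w (pos i) * of_int (\<sigma> (pos i)))"
      by (rule key) (simp add: w_def)
    thus ?thesis by (simp add: wpos)
  qed
  have S2: "(\<Sum>t\<in>I. (- w t) * of_int (\<sigma> t)) = - (\<Sum>i<l. c i * of_int (\<sigma> (pos i)))" for \<sigma> :: "int \<Rightarrow> int"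
  proof -
    have "(\<Sum>t\<in>I. (- w t) * of_int (\<sigma> t)) = (\<Sum>i<l. (- w (pos i)) * of_int (\<sigma> (pos i)))"
      by (rule key) (simp add: w_def)
    thus ?thesis by (simp add: wpos sum_negf)
  qed
  have "(\<Sum>t\<in>I. (w t)^2) = (\<Sum>t\<in>I. w t * w t)" by (simp add: power2_eq_square)
  also have "\<dots> = (\<Sum>i<l. w (pos i) * w (pos i))" by (rule key) (simp add: w_def)
  also have "\<dots> = (\<Sum>i<l. c i * c i)" by (simp add: wpos)
  also have "\<dots> \<le> (\<Sum>i<l. 1)"
    by (intro sum_mono) (use assms(4) in \<open>metis abs_le_square_iff abs_one power2_eq_square one_power2\<close>)
  finally have W: "(\<Sum>t\<in>I. (w t)^2) \<le> real l" by simp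
  have W': "(\<Sum>t\<in>I. (- w t)^2) \<le> real l" using W by simp
  let ?P = "PiE I (\<lambda>_. {-1,1::int})"
  have "{\<sigma>\<in>?P. \<bar>\<Sum>i<l. c i * of_int (\<sigma> (pos i))\<bar> > B} \<subseteq>
        {\<sigma>\<in>?P. (\<Sum>t\<in>I. w t * of_int (\<sigma> t)) > B} \<union> {\<sigma>\<in>?P. (\<Sum>t\<in>I. (- w t) * of_int (\<sigma> t)) > B}"
    unfolding S1 S2 by auto
  hence "card {\<sigma>\<in>?P. \<bar>\<Sum>i<l. c i * of_int (\<sigma> (pos i))\<bar> > B} \<le>
        card ({\<sigma>\<in>?P. (\<Sum>t\<in>I. w t * of_int (\<sigma> t)) > B} \<union> {\<sigma>\<in>?P. (\<Sum>t\<in>I. (- w t) * of_int (\<sigma> t)) > B})"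
    by (intro card_mono) (use assms(1) in \<open>auto simp: finite_PiE\<close>)
  also have "\<dots> \<le> card {\<sigma>\<in>?P. (\<Sum>t\<in>I. w t * of_int (\<sigma> t)) > B} + card {\<sigma>\<in>?P. (\<Sum>t\<in>I. (- w t) * of_int (\<sigma> t)) > B}"
    by (rule card_Un_le)
  finally have "real (card {\<sigma>\<in>?P. \<bar>\<Sum>i<l. c i * of_int (\<sigma> (pos i))\<bar> > B}) \<le>
     real (card {\<sigma>\<in>?P. (\<Sum>t\<in>I. w t * of_int (\<sigma> t)) > B}) + real (card {\<sigma>\<in>?P. (\<Sum>t\<in>I. (- w t) * of_int (\<sigma> t)) > B})"
    by linarith
  also have "\<dots> \<le> 2 ^ card I * exp (-(B^2/(2*real l))) + 2 ^ card I * exp (-(B^2/(2*real l)))"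
    by (intro add_mono tail_bound W W') (use assms in auto)
  finally show ?thesis by simp
qed


definition pt :: "int list \<Rightarrow> int list \<Rightarrow> nat \<Rightarrow> int list" where
  "pt a b i = map2 (+) a (map (\<lambda>c. int i * c) b)"

lemma arith_prog_pt: "arith_prog a b l = pt a b ` {..<l}"
  by (auto simp: arith_prog_def pt_def)

lemma length_pt: "length a = length b \<Longrightarrow> length (pt a b i) = length a"
  by (simp add: pt_def)

lemma nth_pt: "length a = length b \<Longrightarrow> k < length a \<Longrightarrow> pt a b i ! k = a ! k + int i * b ! k"
  by (simp add: pt_def)

lemma last_pt: "length a = length b \<Longrightarrow> a \<noteq> [] \<Longrightarrow> last (pt a b i) = last a + int i * last b"
proof -
  assume h: "length a = length b" "a \<noteq> []"
  have "length (pt a b i) = length a" by (rule length_pt[OF h(1)])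
  hence "pt a b i \<noteq> []" "b \<noteq> []" using h by auto
  thus ?thesis using h by (simp add: last_conv_nth nth_pt length_pt)
qed

lemma butlast_pt: "length a = length b \<Longrightarrow> butlast (pt a b i) = pt (butlast a) (butlast b) i"
  by (intro nth_equalityI) (auto simp: length_pt nth_pt nth_butlast)

lemma grid_Nil: "grid [] = {[]}"
  by (auto simp: grid_def)

lemma grid_Cons: "grid (m # M) = (\<lambda>(h,t). h # t) ` ({1..int m} \<times> grid M)"
proof (intro set_eqI iffI)
  fix x assume "x \<in> grid (m # M)"
  then obtain h t where x: "x = h # t" and l: "length t = length M"
    and c: "\<forall>i<Suc (length M). 1 \<le> x ! i \<and> x ! i \<le> int ((m#M) ! i)"
    by (auto simp: grid_def length_Suc_conv)
  have "h \<in> {1..int m}" using c[rule_format, of 0] by (simp add: x)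
  moreover have "t \<in> grid M" using l c by (auto simp: grid_def x)
  ultimately show "x \<in> (\<lambda>(h,t). h # t) ` ({1..int m} \<times> grid M)" using x by auto
next
  fix x assume "x \<in> (\<lambda>(h,t). h # t) ` ({1..int m} \<times> grid M)"
  then obtain h t where x: "x = h # t" and "h \<in> {1..int m}" "t \<in> grid M" by auto
  thus "x \<in> grid (m # M)" by (auto simp: grid_def nth_Cons split: nat.splits)
qed

lemma grid_fin_card: "finite (grid M) \<and> card (grid M) = prod_list M"
proof (induction M)
  case Nil thus ?case by (simp add: grid_Nil)
next
  case (Cons m M)
  have inj: "inj_on (\<lambda>(h,t). h # t) ({1..int m} \<times> grid M)" by (auto simp: inj_on_def)
  show ?case using Cons
    by (simp add: grid_Cons card_image[OF inj] card_cartesian_product)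
qed

lemma grid_snoc: "x \<in> grid (M @ [m]) \<longleftrightarrow>
   x \<noteq> [] \<and> butlast x \<in> grid M \<and> 1 \<le> last x \<and> last x \<le> int m"
proof
  assume h: "x \<in> grid (M @ [m])"
  hence len: "length x = Suc (length M)" by (simp add: grid_def)
  hence ne: "x \<noteq> []" by auto
  have c: "\<And>i. i < Suc (length M) \<Longrightarrow> 1 \<le> x ! i \<and> x ! i \<le> int ((M @ [m]) ! i)"
    using h by (auto simp: grid_def)
  have "\<forall>i<length M. 1 \<le> butlast x ! i \<and> butlast x ! i \<le> int (M ! i)"
  proof (intro allI impI)
    fix i assume "i < length M"
    thus "1 \<le> butlast x ! i \<and> butlast x ! i \<le> int (M ! i)"
      using c[of i] len by (simp add: nth_butlast nth_append)
  qed
  hence "butlast x \<in> grid M" by (simp add: grid_def len)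
  moreover have "1 \<le> last x \<and> last x \<le> int m"
    using c[of "length M"] len ne by (simp add: last_conv_nth)
  ultimately show "x \<noteq> [] \<and> butlast x \<in> grid M \<and> 1 \<le> last x \<and> last x \<le> int m" using ne by auto
next
  assume h: "x \<noteq> [] \<and> butlast x \<in> grid M \<and> 1 \<le> last x \<and> last x \<le> int m"
  hence x: "x = butlast x @ [last x]" by simp
  have lb: "length (butlast x) = length M" using h by (simp add: grid_def)
  show "x \<in> grid (M @ [m])"
    unfolding grid_def mem_Collect_eq
  proof (rule conjI[OF _ allI[OF impI]])
    show "length x = length (M @ [m])" using lb h by (metis length_append_singleton x)
    fix i assume i: "i < length (M @ [m])"
    show "1 \<le> x ! i \<and> x ! i \<le> int ((M @ [m]) ! i)"
    proof (cases "i < length M")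
      case True
      have "butlast x ! i = x ! i" using True lb by (simp add: nth_butlast)
      thus ?thesis using h lb True by (auto simp: grid_def nth_append)
    next
      case False hence "i = length M" using i by simp
      have "x ! i = last x" using h lb \<open>i = length M\<close> by (simp add: last_conv_nth)
      thus ?thesis using h \<open>i = length M\<close> by (simp add: nth_append)
    qed
  qed
qed

lemma AP_family_finite: "finite (AP_family M)"
proof -
  have "AP_family M \<subseteq> Pow (grid M)" by (auto simp: AP_family_def)
  thus ?thesis using grid_fin_card[of M] by (meson finite_Pow_iff finite_subset)
qed


lemma pt_0: "length a = length b \<Longrightarrow> pt a b 0 = a"
  by (intro nth_equalityI) (auto simp: length_pt nth_pt)

lemma pt_1_diff: "length a = length b \<Longrightarrow> map2 (-) (pt a b 1) a = b"
  by (intro nth_equalityI) (auto simp: length_pt nth_pt)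

lemma prod_list_pos: "\<forall>i<length M. M ! i \<ge> (1::nat) \<Longrightarrow> prod_list M \<ge> 1"
proof -
  assume h: "\<forall>i<length M. M ! i \<ge> (1::nat)"
  have "0 \<notin> set M" using h by (auto simp: in_set_conv_nth)
  hence "prod_list M \<noteq> 0" by (simp add: prod_list_zero_iff)
  thus ?thesis by simp
qed

lemma AP_nonempty:
  assumes "M \<noteq> []" "\<forall>i<length M. M ! i \<ge> 1"
  shows "arith_prog (replicate (length M) 1) (replicate (length M) 1) 1 \<in> AP_family M"
proof -
  let ?a = "replicate (length M) (1::int)"
  have ap: "arith_prog ?a ?a 1 = {?a}" by (simp add: arith_prog_pt pt_0 lessThan_Suc)
  have "?a \<in> grid M" using assms(2) by (auto simp: grid_def)
  moreover have "?a \<noteq> replicate (length M) 0" using assms(1) by simp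
  ultimately show ?thesis unfolding AP_family_def
    by (intro CollectI exI[of _ ?a] exI[of _ 1]) (auto simp: ap ap[unfolded One_nat_def])
qed


definition goodcond :: "nat list \<Rightarrow> int list \<Rightarrow> int list \<Rightarrow> nat \<Rightarrow> bool" where
  "goodcond N a c l = (length a = length N \<and> length c = length N \<and> last (map2 (-) c a) \<noteq> 0
      \<and> (\<forall>i<l. pt a (map2 (-) c a) i \<in> grid N))"

definition badset :: "nat list \<Rightarrow> nat \<Rightarrow> (int list \<Rightarrow> int) \<Rightarrow> real \<Rightarrow> int list \<Rightarrow> int list \<Rightarrow> nat \<Rightarrow> (int \<Rightarrow> int) set" where
  "badset M m col' B a c l = {\<sigma>\<in>PiE {1..int m} (\<lambda>_. {-1,1}). goodcond (M @ [m]) a c l \<and>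
     \<bar>\<Sum>i<l. real_of_int (col' (butlast (pt a (map2 (-) c a) i))) * of_int (\<sigma> (last (pt a (map2 (-) c a) i)))\<bar> > B}"

lemma badset_card:
  assumes "M \<noteq> []" "\<forall>x\<in>grid M. col' x \<in> {1,-1}" "l \<ge> 1" "l \<le> m" "B \<ge> 0"
  shows "real (card (badset M m col' B a c l)) \<le> 2 * 2 ^ m * exp (-(B^2/(2*real m)))"
proof (cases "goodcond (M @ [m]) a c l")
  case False thus ?thesis by (simp add: badset_def)
next
  case True
  define b where "b = map2 (-) c a"
  have la: "length a = length (M@[m])" and lc: "length c = length (M@[m])"
    and lb0: "last b \<noteq> 0" and ing: "\<And>i. i < l \<Longrightarrow> pt a b i \<in> grid (M@[m])"
    using True by (auto simp: goodcond_def b_def)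
  have lab: "length a = length b" using la lc by (simp add: b_def)
  have ane: "a \<noteq> []" using la by auto
  define pos where "pos i = last (pt a b i)" for i
  have pos_eq: "pos i = last a + int i * last b" for i by (simp add: pos_def last_pt[OF lab ane])
  have inj: "inj_on pos {..<l}" using lb0 by (auto simp: inj_on_def pos_eq)
  have img: "pos ` {..<l} \<subseteq> {1..int m}" using ing by (auto simp: pos_def grid_snoc)
  have cb: "\<forall>i. \<bar>(if i < l then real_of_int (col' (butlast (pt a b i))) else 0)\<bar> \<le> 1"
  proof
    fix i show "\<bar>(if i < l then real_of_int (col' (butlast (pt a b i))) else 0)\<bar> \<le> 1"
    proof (cases "i < l")
      case True
      hence "butlast (pt a b i) \<in> grid M" using ing[OF True] by (simp add: grid_snoc)
      thus ?thesis using assms(2) True by fastforce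
    qed simp
  qed
  have eq: "badset M m col' B a c l = {\<sigma>\<in>PiE {1..int m} (\<lambda>_. {-1,1::int}).
      \<bar>\<Sum>i<l. (if i < l then real_of_int (col' (butlast (pt a b i))) else 0) * of_int (\<sigma> (pos i))\<bar> > B}"
    using True by (simp add: badset_def b_def pos_def)
  have "real (card (badset M m col' B a c l)) \<le> 2 * 2 ^ card {1..int m} * exp (-(B^2/(2*real l)))"
    unfolding eq by (rule tail_inj[OF _ inj img cb]) (use assms in auto)
  also have "\<dots> \<le> 2 * 2 ^ m * exp (-(B^2/(2*real m)))"
  proof -
    have "B^2/(2*real m) \<le> B^2/(2*real l)"
      using assms by (intro divide_left_mono) auto
    thus ?thesis by simp
  qed
  finally show ?thesis .
qed


lemma exists_sigma:
  assumes "M \<noteq> []" "\<forall>x\<in>grid M. col' x \<in> {1,-1}" "m \<ge> 1" "\<forall>i<length M. M ! i \<ge> 1"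
  defines "P \<equiv> prod_list (M @ [m])"
  defines "B \<equiv> sqrt (6 * real m * ln (2 * real P))"
  shows "\<exists>\<sigma>\<in>PiE {1..int m} (\<lambda>_. {-1,1}). \<forall>a\<in>grid (M@[m]). \<forall>c\<in>grid (M@[m]). \<forall>l\<in>{2..m}.
            \<sigma> \<notin> badset M m col' B a c l"
proof -
  let ?S = "PiE {1..int m} (\<lambda>_. {-1,1::int})"
  let ?G = "grid (M@[m])"
  define Par where "Par = ?G \<times> ?G \<times> {2..m}"
  have PM: "prod_list M \<ge> 1" by (rule prod_list_pos[OF assms(4)])
  have Peq: "P = prod_list M * m" by (simp add: P_def)
  have mP: "m \<le> P" using PM Peq by simp
  have P1: "P \<ge> 1" using mP assms(3) by simp
  have lnpos: "ln (2 * real P) > 0" using P1 by simp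
  have B0: "B \<ge> 0" using lnpos by (simp add: B_def)
  have B2: "B^2 = 6 * real m * ln (2 * real P)" using lnpos by (simp add: B_def)
  have "exp (-(B^2/(2*real m))) = exp (-(3 * ln (2 * real P)))"
    using assms(3) by (simp add: B2)
  also have "\<dots> = 1 / (2 * real P) powr 3"
    using P1 by (simp add: powr_def exp_minus inverse_eq_divide)
  also have "\<dots> = 1 / (8 * real P ^ 3)"
    using P1 by (simp add: powr_numeral power_mult_distrib)
  finally have E: "exp (-(B^2/(2*real m))) = 1 / (8 * real P ^ 3)" .
  have cb: "real (card (badset M m col' B a c l)) \<le> 2 ^ m / (4 * real P ^ 3)"
    if "(a, c, l) \<in> Par" for a c l
  proof -
    have "real (card (badset M m col' B a c l)) \<le> 2 * 2 ^ m * exp (-(B^2/(2*real m)))"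
      by (rule badset_card) (use that assms B0 in \<open>auto simp: Par_def\<close>)
    thus ?thesis by (simp add: E)
  qed
  have finG: "finite ?G" using grid_fin_card by blast
  have cardG: "card ?G = P" using grid_fin_card by (simp add: P_def)
  have finPar: "finite Par" using finG by (simp add: Par_def)
  have cardPar: "real (card Par) \<le> real P ^ 3"
  proof -
    have "card Par = P * P * (m - 1)" by (simp add: Par_def card_cartesian_product cardG)
    also have "\<dots> \<le> P * P * P" using mP by (intro mult_left_mono) auto
    finally show ?thesis by (simp add: power3_eq_cube of_nat_mult[symmetric] del: of_nat_mult)
  qed
  have "real (card (\<Union>p\<in>Par. case p of (a,c,l) \<Rightarrow> badset M m col' B a c l))
      \<le> real (\<Sum>p\<in>Par. card (case p of (a,c,l) \<Rightarrow> badset M m col' B a c l))"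
    by (intro of_nat_mono card_UN_le finPar)
  also have "\<dots> = (\<Sum>p\<in>Par. real (card (case p of (a,c,l) \<Rightarrow> badset M m col' B a c l)))"
    by simp
  also have "\<dots> \<le> (\<Sum>p\<in>Par. 2 ^ m / (4 * real P ^ 3))"
    by (intro sum_mono) (auto intro: cb)
  also have "\<dots> = real (card Par) * (2 ^ m / (4 * real P ^ 3))" by simp
  also have "\<dots> \<le> real P ^ 3 * (2 ^ m / (4 * real P ^ 3))"
    by (intro mult_right_mono cardPar) auto
  also have "\<dots> = 2 ^ m / 4" using P1 by simp
  also have "\<dots> < 2 ^ m" by simp
  also have "\<dots> = real (card ?S)" by (simp add: card_PiE)
  finally have "card (\<Union>p\<in>Par. case p of (a,c,l) \<Rightarrow> badset M m col' B a c l) < card ?S" by linarith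
  have "\<not> ?S \<subseteq> (\<Union>p\<in>Par. case p of (a,c,l) \<Rightarrow> badset M m col' B a c l)"
  proof
    assume sub: "?S \<subseteq> (\<Union>p\<in>Par. case p of (a,c,l) \<Rightarrow> badset M m col' B a c l)"
    have finS: "finite ?S" by (simp add: finite_PiE)
    have "finite (\<Union>p\<in>Par. case p of (a,c,l) \<Rightarrow> badset M m col' B a c l)"
    proof (rule finite_UN_I[OF finPar])
      fix p assume "p \<in> Par"
      show "finite (case p of (a,c,l) \<Rightarrow> badset M m col' B a c l)"
        by (cases p) (auto simp: badset_def intro: finite_subset[OF _ finS])
    qed
    from card_mono[OF this sub] show False using \<open>card _ < card ?S\<close> by linarith
  qed
  then obtain \<sigma> where "\<sigma> \<in> ?S" "\<sigma> \<notin> (\<Union>p\<in>Par. case p of (a,c,l) \<Rightarrow> badset M m col' B a c l)"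
    by blast
  thus ?thesis by (auto simp: Par_def)
qed


lemma ln2_ge: "ln (2::real) \<ge> 1/6"
proof -
  have "1 + (-1/6) \<le> exp (-1/6::real)" by (rule exp_ge_add_one_self)
  hence "exp (1/6::real) \<le> 6/5"
    by (simp add: exp_minus field_simps)
  hence "exp (1/6::real) \<le> 2" by simp
  hence "ln (exp (1/6::real)) \<le> ln 2" by (subst ln_le_cancel_iff) auto
  thus ?thesis by simp
qed

lemma main_col:
  assumes "M \<noteq> []" and col': "\<forall>x\<in>grid M. col' x \<in> {1,-1}" and "m \<ge> 1" "\<forall>i<length M. M ! i \<ge> 1"
  defines "P \<equiv> prod_list (M @ [m])"
  defines "B \<equiv> sqrt (6 * real m * ln (2 * real P))"
  defines "F \<equiv> (SUP A\<in>AP_family M. real_of_int \<bar>\<Sum>x\<in>A. col' x\<bar>)"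
  shows "\<exists>col. (\<forall>x\<in>grid (M@[m]). col x \<in> {1,-1}) \<and>
           (\<forall>A\<in>AP_family (M@[m]). real_of_int \<bar>\<Sum>x\<in>A. col x\<bar> \<le> max F B)"
proof -
  let ?N = "M @ [m]"
  obtain \<sigma> where \<sigma>S: "\<sigma> \<in> PiE {1..int m} (\<lambda>_. {-1,1::int})"
    and \<sigma>good: "\<And>a c l. a \<in> grid ?N \<Longrightarrow> c \<in> grid ?N \<Longrightarrow> l \<in> {2..m} \<Longrightarrow> \<sigma> \<notin> badset M m col' B a c l"
    using exists_sigma[OF assms(1-4)] unfolding P_def B_def by blast
  have \<sigma>v: "\<sigma> t \<in> {-1,1}" if "t \<in> {1..int m}" for t using \<sigma>S that by (auto simp: PiE_def Pi_def)
  have PM: "prod_list M \<ge> 1" by (rule prod_list_pos[OF assms(4)])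
  have P1: "P \<ge> 1" using PM assms(3) by (simp add: P_def)
  have "ln (2 * real P) \<ge> ln 2" using P1 by simp
  hence "6 * real m * ln (2 * real P) \<ge> 6 * 1 * (1/6)"
    using ln2_ge assms(3) by (intro mult_mono) auto
  hence B1: "B \<ge> 1" by (simp add: B_def)
  define col where "col x = col' (butlast x) * \<sigma> (last x)" for x
  have colv: "col x \<in> {1,-1}" if "x \<in> grid ?N" for x
  proof -
    have "butlast x \<in> grid M" "last x \<in> {1..int m}" using that by (auto simp: grid_snoc)
    hence "col' (butlast x) \<in> {1,-1}" "\<sigma> (last x) \<in> {-1,1}" using col' \<sigma>v by auto
    thus ?thesis by (auto simp: col_def)
  qed
  have finAP: "finite (AP_family M)" by (rule AP_family_finite)
  have main: "real_of_int \<bar>\<Sum>x\<in>A. col x\<bar> \<le> max F B" if A: "A \<in> AP_family ?N" for A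
  proof -
    obtain a b l where Aeq: "A = arith_prog a b l" and la: "length a = length ?N" and lb: "length b = length ?N"
      and bnz: "b \<noteq> replicate (length ?N) 0" and l1: "l \<ge> 1" and sub: "arith_prog a b l \<subseteq> grid ?N"
      using A unfolding AP_family_def by blast
    have lab: "length a = length b" using la lb by simp
    have ane: "a \<noteq> []" using la by auto
    have Apt: "A = pt a b ` {..<l}" by (simp add: Aeq arith_prog_pt)
    have ing: "pt a b i \<in> grid ?N" if "i < l" for i using sub that by (auto simp: arith_prog_pt)
    show ?thesis
    proof (cases "last b = 0")
      case True
      define A' where "A' = arith_prog (butlast a) (butlast b) l"
      have lab': "length (butlast a) = length (butlast b)" using lab by simp
      have bnz': "butlast b \<noteq> replicate (length M) 0"
      proof
        assume h: "butlast b = replicate (length M) 0"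
        have "b = butlast b @ [last b]" using lb by (intro append_butlast_last_id[symmetric]) auto
        also have "\<dots> = replicate (length ?N) 0" using h True by (simp add: replicate_append_same)
        finally show False using bnz by simp
      qed
      have A'pt: "A' = (\<lambda>i. butlast (pt a b i)) ` {..<l}" by (simp add: A'_def arith_prog_pt butlast_pt[OF lab])
      have "A' \<subseteq> grid M" using ing by (auto simp: A'pt grid_snoc)
      hence A'in: "A' \<in> AP_family M" unfolding AP_family_def A'_def
        using la lb bnz' l1 by (intro CollectI exI[of _ "butlast a"] exI[of _ "butlast b"] exI[of _ l]) auto
      have lastc: "last x = last a" if "x \<in> A" for x
        using that True by (auto simp: Apt last_pt[OF lab ane])
      have nen: "x \<noteq> []" if "x \<in> A" for x using that ing by (auto simp: Apt grid_snoc)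
      have inj: "inj_on butlast A"
      proof (rule inj_onI)
        fix x y assume "x \<in> A" "y \<in> A" "butlast x = butlast y"
        thus "x = y" using lastc nen by (metis append_butlast_last_id)
      qed
      have A'img: "A' = butlast ` A" by (simp add: A'pt Apt image_image)
      have "(\<Sum>x\<in>A. col x) = (\<Sum>x\<in>A. col' (butlast x) * \<sigma> (last a))"
        by (intro sum.cong) (auto simp: col_def lastc)
      also have "\<dots> = \<sigma> (last a) * (\<Sum>x\<in>A. col' (butlast x))"
        by (simp add: sum_distrib_left mult.commute)
      also have "(\<Sum>x\<in>A. col' (butlast x)) = (\<Sum>y\<in>A'. col' y)"
        by (simp add: A'img sum.reindex[OF inj])
      finally have seq: "(\<Sum>x\<in>A. col x) = \<sigma> (last a) * (\<Sum>y\<in>A'. col' y)" .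
      have "last a \<in> {1..int m}"
      proof -
        have "pt a b 0 \<in> grid ?N" using ing l1 by auto
        thus ?thesis by (simp add: pt_0[OF lab] grid_snoc)
      qed
      hence "\<bar>\<sigma> (last a)\<bar> = 1" using \<sigma>v by fastforce
      hence "real_of_int \<bar>\<Sum>x\<in>A. col x\<bar> = real_of_int \<bar>\<Sum>y\<in>A'. col' y\<bar>"
        by (simp add: seq abs_mult)
      also have "\<dots> \<le> F" unfolding F_def
        by (rule cSUP_upper[OF A'in]) (use finAP in auto)
      finally show ?thesis by simp
    next
      case False
      have inj: "inj_on (pt a b) {..<l}"
      proof (rule inj_onI)
        fix i j assume "i \<in> {..<l}" "j \<in> {..<l}" "pt a b i = pt a b j"
        hence "last (pt a b i) = last (pt a b j)" by simp
        thus "i = j" using False by (simp add: last_pt[OF lab ane])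
      qed
      have sumeq: "(\<Sum>x\<in>A. col x) = (\<Sum>i<l. col (pt a b i))"
        by (simp add: Apt sum.reindex[OF inj])
      show ?thesis
      proof (cases "l = 1")
        case True
        have "(\<Sum>x\<in>A. col x) = col (pt a b 0)" by (simp add: sumeq True)
        moreover have "col (pt a b 0) \<in> {1,-1}" using colv ing True by auto
        ultimately have "real_of_int \<bar>\<Sum>x\<in>A. col x\<bar> = 1" by auto
        thus ?thesis using B1 by simp
      next
        case l2: False
        define c where "c = pt a b 1"
        have cin: "c \<in> grid ?N" using ing l1 l2 by (simp add: c_def)
        have ain: "a \<in> grid ?N" using ing[of 0] l1 by (simp add: pt_0[OF lab])
        have bc: "map2 (-) c a = b" unfolding c_def by (rule pt_1_diff[OF lab])
        have "card ((\<lambda>i. last (pt a b i)) ` {..<l}) \<le> card {1..int m}"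
          by (intro card_mono) (use ing in \<open>auto simp: grid_snoc\<close>)
        moreover have "inj_on (\<lambda>i. last (pt a b i)) {..<l}"
          using False by (auto simp: inj_on_def last_pt[OF lab ane])
        ultimately have lm: "l \<le> m" by (simp add: card_image)
        have "\<sigma> \<notin> badset M m col' B a c l" using \<sigma>good[OF ain cin] lm l1 l2 by auto
        moreover have "goodcond ?N a c l" unfolding goodcond_def bc
          using la lb False ing c_def cin by (auto simp: grid_def)
        ultimately have "\<bar>\<Sum>i<l. real_of_int (col' (butlast (pt a b i))) * of_int (\<sigma> (last (pt a b i)))\<bar> \<le> B"
          using \<sigma>S by (auto simp: badset_def bc)
        moreover have "real_of_int (\<Sum>x\<in>A. col x) = (\<Sum>i<l. real_of_int (col' (butlast (pt a b i))) * of_int (\<sigma> (last (pt a b i))))"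
          unfolding sumeq by (simp add: col_def)
        ultimately show ?thesis by simp
      qed
    qed
  qed
  show ?thesis using colv main by blast
qed


lemma SUP_nonneg:
  assumes "M \<noteq> []" "\<forall>i<length M. M ! i \<ge> 1"
  shows "(SUP A\<in>AP_family M. real_of_int \<bar>\<Sum>x\<in>A. col x\<bar>) \<ge> 0"
proof -
  have "0 \<le> real_of_int \<bar>\<Sum>x\<in>arith_prog (replicate (length M) 1) (replicate (length M) 1) 1. col x\<bar>"
    by simp
  also have "\<dots> \<le> (SUP A\<in>AP_family M. real_of_int \<bar>\<Sum>x\<in>A. col x\<bar>)"
    by (rule cSUP_upper[OF AP_nonempty[OF assms]]) (use AP_family_finite in auto)
  finally show ?thesis .
qed

lemma disc_snoc:
  assumes "M \<noteq> []" "m \<ge> 1" "\<forall>i<length M. M ! i \<ge> 1"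
  shows "disc (M @ [m]) \<le> max (disc M) (sqrt (6 * real m * ln (2 * real (prod_list (M @ [m])))))"
proof (rule ccontr)
  let ?N = "M @ [m]"
  define B where "B = sqrt (6 * real m * ln (2 * real (prod_list ?N)))"
  define Fk where "Fk K col = (SUP A\<in>AP_family K. real_of_int \<bar>\<Sum>x\<in>A. (col :: int list \<Rightarrow> int) x\<bar>)" for K col
  define Col where "Col K = {col. \<forall>x\<in>grid K. (col :: int list \<Rightarrow> int) x \<in> {1, -1}}" for K
  have dK: "disc K = (INF col\<in>Col K. Fk K col)" for K by (simp add: disc_def Fk_def Col_def)
  have NN: "?N \<noteq> []" "\<forall>i<length ?N. ?N ! i \<ge> 1" using assms by (auto simp: nth_append)
  assume "\<not> disc ?N \<le> max (disc M) B"
  hence lt: "disc M < disc ?N" "B < disc ?N" by auto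
  have "Col M \<noteq> {}" by (auto simp: Col_def intro!: exI[of _ "\<lambda>_. 1"])
  moreover have "bdd_below (Fk M ` Col M)"
    by (rule bdd_belowI[of _ 0], elim imageE, simp only: Fk_def SUP_nonneg[OF assms(1,3)])
  ultimately obtain col' where col': "col' \<in> Col M" "Fk M col' < disc ?N"
    using lt(1) unfolding dK[of M] by (auto simp: cInf_less_iff)
  obtain col where colC: "\<forall>x\<in>grid ?N. col x \<in> {1,-1}"
    and colB: "\<forall>A\<in>AP_family ?N. real_of_int \<bar>\<Sum>x\<in>A. col x\<bar> \<le> max (Fk M col') B"
    using main_col[OF assms(1) _ assms(2,3), of col'] col'(1) unfolding Col_def Fk_def B_def by blast
  have "Fk ?N col \<le> max (Fk M col') B"
    unfolding Fk_def[of ?N]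
  proof (rule cSUP_least)
    show "AP_family ?N \<noteq> {}" using AP_nonempty[OF NN] by auto
    fix A assume "A \<in> AP_family ?N"
    thus "real_of_int \<bar>\<Sum>x\<in>A. col x\<bar> \<le> max (Fk M col') B" using colB by blast
  qed
  moreover have "disc ?N \<le> Fk ?N col"
    unfolding dK[of ?N]
  proof (rule cINF_lower)
    show "col \<in> Col ?N" using colC by (simp add: Col_def)
    show "bdd_below (Fk ?N ` Col ?N)"
      by (rule bdd_belowI[of _ 0], elim imageE, simp only: Fk_def SUP_nonneg[OF NN])
  qed
  ultimately show False using col'(2) lt(2) by linarith
qed

theorem lemma6p1:
  fixes N :: "nat list"
  assumes "length N \<ge> 2"
    and "\<forall>i<length N. N ! i \<ge> 1"
  shows "disc N \<le> max (disc (butlast N))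
           (sqrt (6 * real (last N) * ln (2 * real (prod_list N))))"
proof -
  have ne: "N \<noteq> []" using assms(1) by auto
  have "butlast N \<noteq> []" using assms(1) by (cases N rule: rev_cases) auto
  moreover have "last N \<ge> 1" using assms ne by (simp add: last_conv_nth)
  moreover have "\<forall>i<length (butlast N). butlast N ! i \<ge> 1" using assms(2) by (simp add: nth_butlast)
  ultimately have "disc (butlast N @ [last N]) \<le> max (disc (butlast N))
      (sqrt (6 * real (last N) * ln (2 * real (prod_list (butlast N @ [last N])))))"
    by (rule disc_snoc)
  thus ?thesis by (simp only: append_butlast_last_id[OF ne])
qed

end
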